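(* Let $b>a>0$ and $\lambda>0$, and let the disruption intensity be $\lambda(t)=0$ for $0\le t\le b$ and $\lambda(t)=\lambda$ for $t>b$. Then $$M_{a,b}(0)=b+\frac{1}{\lambda}\left(e^{\lambda b}-e^{\lambda(b-a)}\right),\qquad M_{b,a}(0)=b+\frac{1}{\lambda}\left(e^{\lambda a}-1\right),$$ and LPT is optimal, i.e. $M_{b,a}(0)<M_{a,b}(0)$.
   Context: Model: a single machine processes a finite batch of tasks one at a time in a fixed order. A task of length $c>0$ requires $c$ units of uninterrupted processing. Disruptions occur at the points of a non-homogeneous Poisson process on $[0,\infty)$ with intensity function $\lambda(t)\ge 0$. If a disruption occurs while a task is being processed, all work on it is lost and that task is restarted from scratch at the disruption time (no repair time); a task is completed once it has been processed for $c$ consecutive time units with no disruption, and the machine then immediately starts the next task. For task lengths $c_1,\dots,c_k$ and $t\ge0$, $M_{c_1,\dots,c_k}(t)$ denotes the expected time, measured from $t$, to complete all tasks in the order $c_1,\dots,c_k$ when processing of $c_1$ starts at time $t$. LPT (longest processing time first) means processing the longer task first. *)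

theory Defs
  imports "HOL-Probability.Probability"
begin

text \<open>Non-homogeneous Poisson process on [0,\<infinity>) with intensity lam, given as a
counting process N t \<omega> (number of disruptions in (0,t]) on a probability space M:
counting paths (start at 0, nondecreasing, right-continuous), independent increments,
and N t - N s Poisson distributed with mean the integral of lam over [s,t].\<close>

definition is_NHPP :: "'a measure \<Rightarrow> (real \<Rightarrow> 'a \<Rightarrow> nat) \<Rightarrow> (real \<Rightarrow> real) \<Rightarrow> bool" where
  "is_NHPP M N lam \<longleftrightarrow>
     prob_space M \<and>
     (\<forall>t\<ge>0. N t \<in> measurable M (count_space UNIV)) \<and>
     (\<forall>\<omega>\<in>space M. N 0 \<omega> = 0 \<and> mono_on {0..} (\<lambda>t. N t \<omega>) \<and>
         (\<forall>t\<ge>0. continuous (at_right t) (\<lambda>s. real (N s \<omega>)))) \<and>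
     (\<forall>s t k. 0 \<le> s \<longrightarrow> s \<le> t \<longrightarrow>
         measure M {\<omega>\<in>space M. N t \<omega> - N s \<omega> = k} =
           exp (- integral {s..t} lam) * (integral {s..t} lam) ^ k / fact k) \<and>
     (\<forall>(n::nat) (ts::nat \<Rightarrow> real). 0 \<le> ts 0 \<longrightarrow> (\<forall>i<n. ts i \<le> ts (Suc i)) \<longrightarrow>
         prob_space.indep_vars M (\<lambda>_. count_space UNIV)
           (\<lambda>i \<omega>. N (ts (Suc i)) \<omega> - N (ts i) \<omega>) {..<n})"

definition next_disr :: "(real \<Rightarrow> nat) \<Rightarrow> real \<Rightarrow> real" where
  "next_disr f u = Inf {s. s > u \<and> f s > f u}"

fun restarts :: "(real \<Rightarrow> nat) \<Rightarrow> real \<Rightarrow> nat \<Rightarrow> real" where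
  "restarts f u 0 = u"
| "restarts f u (Suc n) = next_disr f (restarts f u n)"

definition finish_task :: "(real \<Rightarrow> nat) \<Rightarrow> real \<Rightarrow> real \<Rightarrow> real option" where
  "finish_task f c u =
     (if \<exists>n. f (restarts f u n + c) = f (restarts f u n)
      then Some (restarts f u (LEAST n. f (restarts f u n + c) = f (restarts f u n)) + c)
      else None)"

fun finish_all :: "(real \<Rightarrow> nat) \<Rightarrow> real \<Rightarrow> real list \<Rightarrow> real option" where
  "finish_all f u [] = Some u"
| "finish_all f u (c # cs) =
     (case finish_task f c u of None \<Rightarrow> None | Some v \<Rightarrow> finish_all f v cs)"

definition expected_completion ::
  "'a measure \<Rightarrow> (real \<Rightarrow> 'a \<Rightarrow> nat) \<Rightarrow> real list \<Rightarrow> real \<Rightarrow> ennreal" where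
  "expected_completion M N cs t =
     (\<integral>\<^sup>+ \<omega>. (case finish_all (\<lambda>s. N s \<omega>) t cs of None \<Rightarrow> \<infinity> | Some v \<Rightarrow> ennreal (v - t)) \<partial>M)"

end

theory Submission
  imports Defs
begin

lemma rc_const:
  fixes f :: "real \<Rightarrow> nat"
  assumes "continuous (at_right t) (\<lambda>s. real (f s))"
  shows "\<exists>d>0. \<forall>s. t \<le> s \<and> s < t + d \<longrightarrow> f s = f t"
proof -
  have "((\<lambda>s. real (f s)) \<longlongrightarrow> real (f t)) (at_right t)"
    using assms by (simp add: continuous_within)
  then have "eventually (\<lambda>s. dist (real (f s)) (real (f t)) < 1/2) (at_right t)"
    unfolding tendsto_iff by (metis divide_pos_pos zero_less_numeral zero_less_one)
  then obtain b where b: "b > t" "\<And>y. y > t \<Longrightarrow> y < b \<Longrightarrow> dist (real (f y)) (real (f t)) < 1/2"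
    by (auto simp: eventually_at_right_field)
  have "f s = f t" if "t \<le> s" "s < t + (b - t)" for s
  proof (cases "s = t")
    case False
    then have "dist (real (f s)) (real (f t)) < 1/2" using b that by auto
    then have h: "\<bar>real (f s) - real (f t)\<bar> < 1/2" by (simp add: dist_real_def)
    show ?thesis
    proof (cases "f s < f t")
      case True
      then have "real (f s) + 1 \<le> real (f t)" by linarith
      then show ?thesis using h by linarith
    next
      case False
      show ?thesis
      proof (rule ccontr)
        assume "f s \<noteq> f t"
        then have "real (f t) + 1 \<le> real (f s)" using False by linarith
        then show False using h by linarith
      qed
    qed
  qed simp
  moreover have "b - t > 0" using b by simp
  ultimately show ?thesis by blast
qed

locale path =
  fixes f :: "real \<Rightarrow> nat"
  assumes mono: "mono_on {0..} f"
    and rc: "\<And>t. t \<ge> 0 \<Longrightarrow> continuous (at_right t) (\<lambda>s. real (f s))"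
begin

lemma monoD: "0 \<le> x \<Longrightarrow> x \<le> y \<Longrightarrow> f x \<le> f y"
  using mono by (auto simp: mono_on_def)

lemma nd_props:
  assumes "0 \<le> v" "f v < f w" "v < w"
  shows "v < next_disr f v \<and> next_disr f v \<le> w \<and> f v < f (next_disr f v)
     \<and> (\<forall>s. v \<le> s \<and> s < next_disr f v \<longrightarrow> f s = f v)"
proof -
  define D where "D = {s. s > v \<and> f s > f v}"
  have wD: "w \<in> D" using assms by (auto simp: D_def)
  have bdd: "bdd_below D" unfolding D_def by (rule bdd_belowI[of _ v]) auto
  have nd: "next_disr f v = Inf D" by (simp add: next_disr_def D_def)
  have le_w: "Inf D \<le> w" using wD bdd by (rule cInf_lower)
  obtain d where d: "d > 0" "\<And>s. v \<le> s \<and> s < v + d \<Longrightarrow> f s = f v"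
    using rc_const[OF rc[OF assms(1)]] by blast
  have "v + d \<le> Inf D"
  proof (rule cInf_greatest)
    show "D \<noteq> {}" using wD by auto
    fix x assume "x \<in> D"
    then have x: "x > v" "f x > f v" by (auto simp: D_def)
    show "v + d \<le> x"
    proof (rule ccontr)
      assume "\<not> v + d \<le> x"
      then have "f x = f v" using d(2)[of x] x by simp
      then show False using x by simp
    qed
  qed
  then have gt: "v < Inf D" using d by linarith
  have const: "f s = f v" if "v \<le> s" "s < Inf D" for s
  proof (rule ccontr)
    assume ne: "f s \<noteq> f v"
    have "f v \<le> f s" by (rule monoD) (use assms(1) that in auto)
    with ne have "f s > f v" by auto
    moreover have "s \<noteq> v" using ne by auto
    ultimately have "s \<in> D" using that by (auto simp: D_def)
    then have "Inf D \<le> s" using bdd by (rule cInf_lower)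
    then show False using that by auto
  qed
  obtain d' where d': "d' > 0" "\<And>s. Inf D \<le> s \<and> s < Inf D + d' \<Longrightarrow> f s = f (Inf D)"
  proof -
    have "0 \<le> Inf D" using gt assms(1) by linarith
    then show ?thesis using rc_const[OF rc] that by blast
  qed
  have "Inf D < Inf D + d'" using d' by simp
  moreover have "D \<noteq> {}" using wD by auto
  ultimately obtain s where s: "s \<in> D" "s < Inf D + d'"
    using cInf_less_iff[of D "Inf D + d'"] bdd by auto
  have "Inf D \<le> s" using s(1) bdd by (rule cInf_lower)
  then have "f s = f (Inf D)" using d'(2) s(2) by blast
  then have "f v < f (Inf D)" using s by (auto simp: D_def)
  then show ?thesis using gt le_w const unfolding nd by blast
qed

lemma finish_task_le:
  assumes "0 \<le> u" "0 < c" "u + c \<le> t" "f t = f (t - c)"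
  shows "\<exists>T. finish_task f c u = Some T \<and> T \<le> t \<and> u + c \<le> T \<and> f T = f (T - c)"
proof -
  define R where "R = restarts f u"
  have claim: "(\<forall>k<n. f (R k + c) \<noteq> f (R k)) \<longrightarrow> u \<le> R n \<and> R n \<le> t - c \<and> f u + n \<le> f (R n)" for n
  proof (induction n)
    case 0
    then show ?case using assms by (simp add: R_def)
  next
    case (Suc n)
    show ?case
    proof
      assume fail: "\<forall>k<Suc n. f (R k + c) \<noteq> f (R k)"
      then have IH: "u \<le> R n" "R n \<le> t - c" "f u + n \<le> f (R n)" using Suc by auto
      have R0: "0 \<le> R n" using IH assms by linarith
      have "f (R n) \<le> f (R n + c)" by (rule monoD) (use R0 assms in auto)
      moreover have "f (R n + c) \<noteq> f (R n)" using fail by auto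
      ultimately have lt: "f (R n) < f (R n + c)" by auto
      have RS: "R (Suc n) = next_disr f (R n)" by (simp add: R_def)
      have "R n < R n + c" using assms by simp
      note P0 = nd_props[OF R0 lt this, folded RS]
      have P: "R n < R (Suc n)" "R (Suc n) \<le> R n + c" "f (R n) < f (R (Suc n))"
          "\<And>s. R n \<le> s \<Longrightarrow> s < R (Suc n) \<Longrightarrow> f s = f (R n)"
        using P0 by blast+
      have "R (Suc n) \<le> t - c"
      proof (rule ccontr)
        assume "\<not> ?thesis"
        then have "f (t - c) = f (R n)" using P(4)[of "t - c"] IH by auto
        moreover have "f (R (Suc n)) \<le> f t"
        proof (rule monoD)
          show "0 \<le> R (Suc n)" using P(1) R0 by linarith
          show "R (Suc n) \<le> t" using P(2) IH by linarith
        qed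
        ultimately show False using P(3) assms(4) by auto
      qed
      then show "u \<le> R (Suc n) \<and> R (Suc n) \<le> t - c \<and> f u + Suc n \<le> f (R (Suc n))"
        using P IH by linarith
    qed
  qed
  have ex: "\<exists>n. f (R n + c) = f (R n)"
  proof (rule ccontr)
    assume "\<not> ?thesis"
    then have "\<forall>k<Suc (f (t - c)). f (R k + c) \<noteq> f (R k)" by blast
    then have h: "u \<le> R (Suc (f (t - c)))" "R (Suc (f (t - c))) \<le> t - c" "f u + Suc (f (t - c)) \<le> f (R (Suc (f (t - c))))"
      using claim by blast+
    moreover have "f (R (Suc (f (t - c)))) \<le> f (t - c)" by (rule monoD) (use h assms in linarith)+
    ultimately show False by linarith
  qed
  define K where "K = (LEAST n. f (R n + c) = f (R n))"
  have K1: "f (R K + c) = f (R K)" unfolding K_def using ex by (rule LeastI_ex)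
  have "\<forall>k<K. f (R k + c) \<noteq> f (R k)" unfolding K_def using not_less_Least by blast
  then have K2: "u \<le> R K" "R K \<le> t - c" using claim by blast+
  have "finish_task f c u = Some (R K + c)"
    using ex by (simp add: finish_task_def R_def K_def)
  then show ?thesis using K1 K2 by auto
qed

end

lemma Lam:
  fixes b r s t :: real assumes "s \<le> t"
  shows "integral {s..t} (\<lambda>x. if x \<le> b then 0 else r) = r * (max t b - max s b)"
proof -
  have "((\<lambda>x. if x \<le> b then 0 else r) has_integral ((\<lambda>x. r * max x b) t - (\<lambda>x. r * max x b) s)) {s..t}"
  proof (rule fundamental_theorem_of_calculus_interior_strong[where S="{b}"])
    show "continuous_on {s..t} (\<lambda>x. r * max x b)" by (intro continuous_intros)
    fix x assume x: "x \<in> {s<..<t} - {b}"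
    show "((\<lambda>x. r * max x b) has_vector_derivative (if x \<le> b then 0 else r)) (at x)"
    proof (cases "x < b")
      case True
      have "((\<lambda>x. r * b) has_vector_derivative 0) (at x)" by (rule derivative_eq_intros) auto
      then have "((\<lambda>x. r * max x b) has_vector_derivative 0) (at x)"
        by (rule has_vector_derivative_transform_within_open[where S="{..<b}"]) (use True in auto)
      then show ?thesis using True by simp
    next
      case False
      then have xb: "x > b" using x by auto
      have "((\<lambda>x. r * x) has_field_derivative r * 1) (at x)"
        by (intro DERIV_cmult DERIV_ident)
      then have "((\<lambda>x. r * x) has_vector_derivative r) (at x)"
        by (simp add: has_real_derivative_iff_has_vector_derivative)
      then have "((\<lambda>x. r * max x b) has_vector_derivative r) (at x)"
        by (rule has_vector_derivative_transform_within_open[where S="{b<..}"]) (use xb in auto)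
      then show ?thesis using xb by simp
    qed
  qed (use assms in auto)
  then show ?thesis by (simp add: integral_unique right_diff_distrib)
qed

lemma mono_seq_eq:
  fixes a :: "nat \<Rightarrow> nat"
  assumes "incseq a" "i \<le> j"
  shows "a j = a i \<longleftrightarrow> (\<forall>l\<in>{i..<j}. a (Suc l) = a l)"
  using assms(2)
proof (induction j)
  case 0
  then show ?case by simp
next
  case (Suc j)
  show ?case
  proof (cases "i = Suc j")
    case True then show ?thesis by simp
  next
    case False
    then have ij: "i \<le> j" using Suc by simp
    have m1: "a i \<le> a j" "a j \<le> a (Suc j)" using assms(1) ij by (auto simp: incseq_def)
    have "a (Suc j) = a i \<longleftrightarrow> a j = a i \<and> a (Suc j) = a j" using m1 by auto
    also have "\<dots> \<longleftrightarrow> (\<forall>l\<in>{i..<Suc j}. a (Suc l) = a l)"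
      using Suc.IH[OF ij] ij by (auto simp: less_Suc_eq)
    finally show ?thesis .
  qed
qed

lemma run_lemma:
  fixes a :: "nat \<Rightarrow> nat"
  assumes "incseq a" "1 \<le> m" "m \<le> k0" "k0 + 1 \<le> k"
  shows "((\<forall>k'<k. \<not>(k0 \<le> k' \<and> a k' = a (k'-m))) \<and> a k = a (k-m)) \<longleftrightarrow>
    ((\<forall>k'<k-m. \<not>(k0 \<le> k' \<and> a k' = a (k'-m))) \<and> a (k-m) \<noteq> a (k-m-1) \<and> a k = a (k-m))"
proof
  assume H: "(\<forall>k'<k. \<not>(k0 \<le> k' \<and> a k' = a (k'-m))) \<and> a k = a (k-m)"
  have "a (k-m) \<noteq> a (k-m-1)"
  proof
    assume eq: "a (k-m) = a (k-m-1)"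
    have "a (k-1) \<le> a k" "a (k-m-1) \<le> a (k-1)" using assms(1) by (auto simp: incseq_def)
    then have "a (k-1) = a (k-1-m)" using eq H by (simp add: algebra_simps)
    moreover have "k - 1 < k" "k0 \<le> k - 1" using assms by auto
    ultimately show False using H by blast
  qed
  then show "(\<forall>k'<k-m. \<not>(k0 \<le> k' \<and> a k' = a (k'-m))) \<and> a (k-m) \<noteq> a (k-m-1) \<and> a k = a (k-m)"
    using H by auto
next
  assume H: "(\<forall>k'<k-m. \<not>(k0 \<le> k' \<and> a k' = a (k'-m))) \<and> a (k-m) \<noteq> a (k-m-1) \<and> a k = a (k-m)"
  have "\<not>(k0 \<le> k' \<and> a k' = a (k'-m))" if "k' < k" for k'
  proof (cases "k' < k - m")
    case True then show ?thesis using H by auto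
  next
    case False
    have "a (k-m-1) \<le> a (k-m)" using assms(1) by (auto simp: incseq_def)
    then have lt: "a (k-m-1) < a (k-m)" using H by auto
    have "a (k-m) \<le> a k'" using False assms(1) by (auto simp: incseq_def)
    moreover have "a (k'-m) \<le> a (k-m-1)" using that assms(1) assms(2) by (auto simp: incseq_def)
    ultimately show ?thesis using lt by auto
  qed
  then show "(\<forall>k'<k. \<not>(k0 \<le> k' \<and> a k' = a (k'-m))) \<and> a k = a (k-m)" using H by auto
qed

locale nhpp_setup =
  fixes M :: "'a measure" and N :: "real \<Rightarrow> 'a \<Rightarrow> nat" and b r :: real
  assumes NH: "is_NHPP M N (\<lambda>t. if t \<le> b then 0 else r)" and r_pos: "0 < r"
begin

sublocale prob_space M using NH by (simp add: is_NHPP_def)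

lemma N_meas: "0 \<le> t \<Longrightarrow> N t \<in> measurable M (count_space UNIV)"
  using NH by (simp add: is_NHPP_def)

lemma path: "\<omega> \<in> space M \<Longrightarrow> path (\<lambda>s. N s \<omega>)"
  using NH unfolding is_NHPP_def path_def by auto

lemma N_mono: "\<omega> \<in> space M \<Longrightarrow> 0 \<le> s \<Longrightarrow> s \<le> t \<Longrightarrow> N s \<omega> \<le> N t \<omega>"
  using path.monoD[OF path] by blast

lemma N0: "\<omega> \<in> space M \<Longrightarrow> N 0 \<omega> = 0"
  using NH by (simp add: is_NHPP_def)

lemma eq_sets: "0 \<le> s \<Longrightarrow> 0 \<le> t \<Longrightarrow> {\<omega>\<in>space M. N t \<omega> = N s \<omega>} \<in> sets M"
proof -
  assume "0 \<le> s" "0 \<le> t"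
  then have m: "N s \<in> measurable M (count_space UNIV)" "N t \<in> measurable M (count_space UNIV)"
    by (auto intro: N_meas)
  have "{\<omega>\<in>space M. N t \<omega> = N s \<omega>} = (\<Union>n\<in>UNIV. (N t -` {n} \<inter> space M) \<inter> (N s -` {n} \<inter> space M))" by auto
  also have "\<dots> \<in> sets M"
    using measurable_sets[OF m(1)] measurable_sets[OF m(2)] by (intro sets.countable_UN) auto
  finally show ?thesis .
qed

lemma prob_eq:
  assumes "0 \<le> s" "s \<le> t"
  shows "prob {\<omega>\<in>space M. N t \<omega> = N s \<omega>} = exp (- (r * (max t b - max s b)))"
proof -
  have "\<forall>s t k. 0 \<le> s \<longrightarrow> s \<le> t \<longrightarrow> prob {\<omega>\<in>space M. N t \<omega> - N s \<omega> = k} =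
           exp (- integral {s..t} (\<lambda>t. if t \<le> b then 0 else r)) * (integral {s..t} (\<lambda>t. if t \<le> b then 0 else r)) ^ k / fact k"
    using NH unfolding is_NHPP_def by blast
  then have h: "prob {\<omega>\<in>space M. N t \<omega> - N s \<omega> = 0} =
           exp (- integral {s..t} (\<lambda>t. if t \<le> b then 0 else r)) * (integral {s..t} (\<lambda>t. if t \<le> b then 0 else r)) ^ 0 / fact 0"
    using assms by blast
  have "{\<omega>\<in>space M. N t \<omega> - N s \<omega> = 0} = {\<omega>\<in>space M. N t \<omega> = N s \<omega>}"
  proof (intro Collect_cong conj_cong refl)
    fix \<omega> assume "\<omega> \<in> space M"
    then have "N s \<omega> \<le> N t \<omega>" using N_mono assms by blast
    then show "(N t \<omega> - N s \<omega> = 0) = (N t \<omega> = N s \<omega>)" by auto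
  qed
  then have "prob {\<omega>\<in>space M. N t \<omega> = N s \<omega>} = exp (- integral {s..t} (\<lambda>t. if t \<le> b then 0 else r))"
    using h by simp
  then show ?thesis using Lam[OF assms(2)] by simp
qed

lemma prob_neq:
  assumes "0 \<le> s" "s \<le> t"
  shows "prob {\<omega>\<in>space M. N t \<omega> \<noteq> N s \<omega>} = 1 - exp (- (r * (max t b - max s b)))"
proof -
  have "{\<omega>\<in>space M. N t \<omega> \<noteq> N s \<omega>} = space M - {\<omega>\<in>space M. N t \<omega> = N s \<omega>}" by auto
  then show ?thesis using prob_compl[OF eq_sets] prob_eq assms by simp
qed

end

locale grid = nhpp_setup +
  fixes g0 h :: real and m L k0 :: nat
  assumes g0: "0 \<le> g0" and hpos: "0 < h" and m1: "1 \<le> m" and gL: "g0 + real L * h = b"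
    and k0L: "L \<le> k0" and k0m: "m \<le> k0" and k0u: "k0 \<le> L + m"
begin

definition tg :: "nat \<Rightarrow> real" where "tg k = g0 + real k * h"
definition Pk :: "nat \<Rightarrow> 'a \<Rightarrow> bool" where "Pk k \<omega> \<longleftrightarrow> k0 \<le> k \<and> N (tg k) \<omega> = N (tg (k - m)) \<omega>"
definition E :: "nat \<Rightarrow> 'a set" where "E j = {\<omega> \<in> space M. \<forall>k<j. \<not> Pk k \<omega>}"
definition F :: "nat \<Rightarrow> real" where "F j = prob (E j)"

lemma tg_nonneg: "0 \<le> tg k" using g0 hpos by (simp add: tg_def)
lemma tg_mono: "k \<le> l \<Longrightarrow> tg k \<le> tg l" using hpos by (simp add: tg_def mult_right_mono)
lemma tg_le_b: "k \<le> L \<Longrightarrow> tg k \<le> b" using hpos gL by (simp add: tg_def mult_right_mono flip: gL)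
lemma tg_ge_b: "L \<le> k \<Longrightarrow> b \<le> tg k" using hpos gL by (simp add: tg_def mult_right_mono flip: gL)
lemma tg_diff: "k \<le> l \<Longrightarrow> tg l - tg k = real (l - k) * h"
  by (simp add: tg_def of_nat_diff algebra_simps)

lemma a_incseq: "\<omega> \<in> space M \<Longrightarrow> incseq (\<lambda>k. N (tg k) \<omega>)"
  unfolding incseq_def using N_mono tg_nonneg tg_mono by blast

lemma Pk_sets: "{\<omega>\<in>space M. Pk k \<omega>} \<in> sets M"
proof (cases "k0 \<le> k")
  case True
  then have "{\<omega>\<in>space M. Pk k \<omega>} = {\<omega>\<in>space M. N (tg k) \<omega> = N (tg (k - m)) \<omega>}" by (auto simp: Pk_def)
  then show ?thesis using eq_sets tg_nonneg by simp
next
  case False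
  then have "{\<omega>\<in>space M. Pk k \<omega>} = {}" by (auto simp: Pk_def)
  then show ?thesis by (metis sets.empty_sets)
qed

lemma E_sets: "E j \<in> sets M"
proof -
  have "E j = space M - (\<Union>k\<in>{..<j}. {\<omega>\<in>space M. Pk k \<omega>})" by (auto simp: E_def)
  then show ?thesis using Pk_sets by auto
qed

lemma E_anti: "j \<le> j' \<Longrightarrow> E j' \<subseteq> E j" by (auto simp: E_def)

lemma F_nonneg: "0 \<le> F j" by (simp add: F_def)

lemma F_init: "j \<le> k0 \<Longrightarrow> F j = 1"
proof -
  assume "j \<le> k0"
  then have "E j = space M" by (auto simp: E_def Pk_def)
  then show "F j = 1" by (simp add: F_def prob_space)
qed

lemma F_k0: "F (Suc k0) = 1 - exp (- (r * (real (k0 - L) * h)))"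
proof -
  have "E (Suc k0) = {\<omega>\<in>space M. N (tg k0) \<omega> \<noteq> N (tg (k0 - m)) \<omega>}"
    by (auto simp: E_def Pk_def less_Suc_eq)
  then have "F (Suc k0) = 1 - exp (- (r * (max (tg k0) b - max (tg (k0 - m)) b)))"
    unfolding F_def using prob_neq[OF tg_nonneg tg_mono[of "k0 - m" k0]] by simp
  also have "max (tg k0) b - max (tg (k0 - m)) b = tg k0 - tg L"
    using tg_ge_b[OF k0L] tg_le_b[of "k0 - m"] k0u gL by (simp add: tg_def)
  also have "\<dots> = real (k0 - L) * h" using tg_diff[OF k0L] .
  finally show ?thesis .
qed

end

context grid
begin

lemma comp_set:
  fixes I :: "nat set" and l :: nat and Q :: "nat \<Rightarrow> bool"
  assumes "l \<in> I"
  shows "{x\<in>space (PiM I (\<lambda>_. count_space (UNIV::nat set))). Q (x l)} \<in> sets (PiM I (\<lambda>_. count_space UNIV))"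
proof -
  have "(\<lambda>x. x l) \<in> measurable (PiM I (\<lambda>_. count_space (UNIV::nat set))) (count_space UNIV)"
    by (rule measurable_component_singleton) (use assms in auto)
  then have "(\<lambda>x. x l) -` {n. Q n} \<inter> space (PiM I (\<lambda>_. count_space (UNIV::nat set))) \<in> sets (PiM I (\<lambda>_. count_space UNIV))"
    by (rule measurable_sets) auto
  moreover have "(\<lambda>x. x l) -` {n. Q n} \<inter> space (PiM I (\<lambda>_. count_space (UNIV::nat set))) =
     {x\<in>space (PiM I (\<lambda>_. count_space (UNIV::nat set))). Q (x l)}" by auto
  ultimately show ?thesis by simp
qed

lemma recur:
  assumes k: "Suc k0 \<le> k"
  shows "F k - F (Suc k) = F (k - m) * (1 - exp (- (r * (max (tg (k-m)) b - max (tg (k-m-1)) b))))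
           * exp (- (r * (max (tg k) b - max (tg (k-m)) b)))"
proof -
  define i0 where "i0 = k - m - 1"
  have i0: "Suc i0 = k - m" "k - m \<le> k" using k k0m m1 by (auto simp: i0_def)
  define ts where "ts i = tg (if i \<le> Suc i0 then i else k)" for i
  define V where "V i \<omega> = N (ts (Suc i)) \<omega> - N (ts i) \<omega>" for i \<omega>
  have ts0: "0 \<le> ts 0" by (simp add: ts_def tg_nonneg)
  have tsm: "\<forall>i<Suc (Suc i0). ts i \<le> ts (Suc i)"
    using i0 by (auto simp: ts_def intro!: tg_mono)
  have "\<forall>(n::nat) (ts::nat \<Rightarrow> real). 0 \<le> ts 0 \<longrightarrow> (\<forall>i<n. ts i \<le> ts (Suc i)) \<longrightarrow>
         indep_vars (\<lambda>_. count_space UNIV) (\<lambda>i \<omega>. N (ts (Suc i)) \<omega> - N (ts i) \<omega>) {..<n}"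
    using NH unfolding is_NHPP_def by blast
  then have ind: "indep_vars (\<lambda>_. count_space UNIV) V {..<Suc (Suc i0)}"
    using ts0 tsm unfolding V_def by blast
  define K where "K j = (if j = (0::nat) then {..<i0} else if j = 1 then {i0} else {Suc i0})" for j
  have ind3: "indep_vars (\<lambda>j. PiM (K j) (\<lambda>_. count_space UNIV)) (\<lambda>j \<omega>. restrict (\<lambda>i. V i \<omega>) (K j)) {0,1,2}"
    by (rule indep_vars_restrict[OF ind]) (auto simp: K_def disjoint_family_on_def)
  define SA where "SA = {x \<in> space (PiM {..<i0} (\<lambda>_. count_space (UNIV::nat set))).
      \<forall>k'<k-m. k0 \<le> k' \<longrightarrow> (\<exists>l\<in>{k'-m..<k'}. x l \<noteq> 0)}"
  define SB where "SB = {x \<in> space (PiM {i0} (\<lambda>_. count_space (UNIV::nat set))). x i0 \<noteq> 0}"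
  define SC where "SC = {x \<in> space (PiM {Suc i0} (\<lambda>_. count_space (UNIV::nat set))). x (Suc i0) = 0}"
  define A where "A j = (if j = (0::nat) then SA else if j = 1 then SB else SC)" for j
  have SA_sets: "SA \<in> sets (PiM {..<i0} (\<lambda>_. count_space (UNIV::nat set)))"
  proof -
    let ?P = "PiM {..<i0} (\<lambda>_. count_space (UNIV::nat set))"
    have "SA = space ?P - (\<Union>k'\<in>{k'. k'<k-m \<and> k0 \<le> k'}. space ?P - (\<Union>l\<in>{k'-m..<k'}. {x\<in>space ?P. x l \<noteq> 0}))"
      unfolding SA_def by blast
    also have "\<dots> \<in> sets ?P"
    proof (intro sets.Diff sets.top sets.finite_UN)
      show "finite {k'. k'<k-m \<and> k0 \<le> k'}" by auto
      fix k' l assume "k' \<in> {k'. k'<k-m \<and> k0 \<le> k'}" "l \<in> {k'-m..<k'}"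
      then have "l \<in> {..<i0}" by (auto simp: i0_def)
      then show "{x\<in>space ?P. x l \<noteq> 0} \<in> sets ?P" by (rule comp_set)
    qed auto
    finally show ?thesis .
  qed
  have Asets: "A j \<in> sets (PiM (K j) (\<lambda>_. count_space UNIV))" if "j \<in> {0,1,2}" for j
    using that SA_sets comp_set[of i0 "{i0}" "\<lambda>n. n \<noteq> 0"] comp_set[of "Suc i0" "{Suc i0}" "\<lambda>n. n = 0"]
    by (auto simp: A_def K_def SB_def SC_def)
  have prodeq: "prob (\<Inter>j\<in>{0,1,2}. (\<lambda>\<omega>. restrict (\<lambda>i. V i \<omega>) (K j)) -` A j \<inter> space M) =
      (\<Prod>j\<in>{0,1,2}. prob ((\<lambda>\<omega>. restrict (\<lambda>i. V i \<omega>) (K j)) -` A j \<inter> space M))"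
    by (rule indep_varsD[OF ind3]) (use Asets in auto)
  have Vl: "V l \<omega> \<noteq> 0 \<longleftrightarrow> N (tg (Suc l)) \<omega> \<noteq> N (tg l) \<omega>" if "l \<le> i0" "\<omega> \<in> space M" for l \<omega>
  proof -
    have "N (tg l) \<omega> \<le> N (tg (Suc l)) \<omega>" using a_incseq[OF that(2)] by (simp add: incseq_Suc_iff)
    then show ?thesis using that by (auto simp: V_def ts_def)
  qed
  have pre0: "(\<lambda>\<omega>. restrict (\<lambda>i. V i \<omega>) (K 0)) -` A 0 \<inter> space M = E (k - m)"
  proof (intro set_eqI iffI)
    fix \<omega> assume w: "\<omega> \<in> (\<lambda>\<omega>. restrict (\<lambda>i. V i \<omega>) (K 0)) -` A 0 \<inter> space M"
    then have sp: "\<omega> \<in> space M" by auto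
    have "\<not> Pk k' \<omega>" if kk: "k' < k - m" for k'
    proof
      assume P: "Pk k' \<omega>"
      then have "k0 \<le> k'" by (simp add: Pk_def)
      then obtain l where l: "l \<in> {k'-m..<k'}" "restrict (\<lambda>i. V i \<omega>) {..<i0} l \<noteq> 0"
        using w kk by (auto simp: A_def SA_def K_def)
      have li: "l < i0" using l kk by (auto simp: i0_def)
      then have "N (tg (Suc l)) \<omega> \<noteq> N (tg l) \<omega>" using l Vl[of l \<omega>] sp by auto
      moreover have "k' - m \<le> k'" by simp
      ultimately have "N (tg k') \<omega> \<noteq> N (tg (k' - m)) \<omega>"
        using mono_seq_eq[OF a_incseq[OF sp], of "k' - m" k'] l by auto
      then show False using P by (simp add: Pk_def)
    qed
    then show "\<omega> \<in> E (k - m)" using sp by (auto simp: E_def)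
  next
    fix \<omega> assume w: "\<omega> \<in> E (k - m)"
    then have sp: "\<omega> \<in> space M" by (auto simp: E_def)
    have "\<exists>l\<in>{k'-m..<k'}. restrict (\<lambda>i. V i \<omega>) {..<i0} l \<noteq> 0" if kk: "k' < k - m" "k0 \<le> k'" for k'
    proof -
      have "N (tg k') \<omega> \<noteq> N (tg (k' - m)) \<omega>" using w kk by (auto simp: E_def Pk_def)
      then have "\<not> (\<forall>l\<in>{k'-m..<k'}. N (tg (Suc l)) \<omega> = N (tg l) \<omega>)"
        using mono_seq_eq[OF a_incseq[OF sp], of "k' - m" k'] by simp
      then obtain l where l: "l \<in> {k'-m..<k'}" "N (tg (Suc l)) \<omega> \<noteq> N (tg l) \<omega>"
        by blast
      have li: "l < i0" using l kk by (auto simp: i0_def)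
      then show ?thesis using l Vl[of l \<omega>] sp by auto
    qed
    moreover have "restrict (\<lambda>i. V i \<omega>) {..<i0} \<in> space (PiM {..<i0} (\<lambda>_. count_space (UNIV::nat set)))"
      by (simp add: space_PiM)
    ultimately show "\<omega> \<in> (\<lambda>\<omega>. restrict (\<lambda>i. V i \<omega>) (K 0)) -` A 0 \<inter> space M"
      using sp by (auto simp: A_def SA_def K_def)
  qed
  have pre1: "(\<lambda>\<omega>. restrict (\<lambda>i. V i \<omega>) (K 1)) -` A 1 \<inter> space M = {\<omega>\<in>space M. N (tg (k-m)) \<omega> \<noteq> N (tg (k-m-1)) \<omega>}"
    using Vl[of i0] i0 by (auto simp: A_def SB_def K_def space_PiM i0_def)
  have Vlast: "V (Suc i0) \<omega> = 0 \<longleftrightarrow> N (tg k) \<omega> = N (tg (k - m)) \<omega>" if "\<omega> \<in> space M" for \<omega>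
  proof -
    have "N (tg (k - m)) \<omega> \<le> N (tg k) \<omega>" using a_incseq[OF that] i0 by (simp add: incseq_def)
    then show ?thesis using i0 by (auto simp: V_def ts_def)
  qed
  have pre2: "(\<lambda>\<omega>. restrict (\<lambda>i. V i \<omega>) (K 2)) -` A 2 \<inter> space M = {\<omega>\<in>space M. N (tg k) \<omega> = N (tg (k-m)) \<omega>}"
    using Vlast by (auto simp: A_def SC_def K_def space_PiM)
  have inter: "E k - E (Suc k) = E (k - m) \<inter> {\<omega>\<in>space M. N (tg (k-m)) \<omega> \<noteq> N (tg (k-m-1)) \<omega>}
        \<inter> {\<omega>\<in>space M. N (tg k) \<omega> = N (tg (k-m)) \<omega>}"
  proof (intro set_eqI)
    fix \<omega>
    show "\<omega> \<in> E k - E (Suc k) \<longleftrightarrow> \<omega> \<in> E (k - m) \<inter> {\<omega>\<in>space M. N (tg (k-m)) \<omega> \<noteq> N (tg (k-m-1)) \<omega>}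
        \<inter> {\<omega>\<in>space M. N (tg k) \<omega> = N (tg (k-m)) \<omega>}"
    proof (cases "\<omega> \<in> space M")
      case True
      have "\<omega> \<in> E k - E (Suc k) \<longleftrightarrow> (\<forall>k'<k. \<not> Pk k' \<omega>) \<and> Pk k \<omega>"
        using True by (auto simp: E_def less_Suc_eq)
      also have "\<dots> \<longleftrightarrow> (\<forall>k'<k. \<not>(k0 \<le> k' \<and> N (tg k') \<omega> = N (tg (k'-m)) \<omega>)) \<and> N (tg k) \<omega> = N (tg (k-m)) \<omega>"
        using k by (auto simp: Pk_def)
      also have "\<dots> \<longleftrightarrow> (\<forall>k'<k-m. \<not>(k0 \<le> k' \<and> N (tg k') \<omega> = N (tg (k'-m)) \<omega>)) \<and>
           N (tg (k-m)) \<omega> \<noteq> N (tg (k-m-1)) \<omega> \<and> N (tg k) \<omega> = N (tg (k-m)) \<omega>"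
        by (rule run_lemma[OF a_incseq[OF True] m1 k0m]) (use k in simp)
      also have "\<dots> \<longleftrightarrow> \<omega> \<in> E (k - m) \<inter> {\<omega>\<in>space M. N (tg (k-m)) \<omega> \<noteq> N (tg (k-m-1)) \<omega>}
        \<inter> {\<omega>\<in>space M. N (tg k) \<omega> = N (tg (k-m)) \<omega>}"
        using True by (auto simp: E_def Pk_def)
      finally show ?thesis .
    qed (auto simp: E_def)
  qed
  have "F k - F (Suc k) = prob (E k - E (Suc k))"
    unfolding F_def by (rule finite_measure_Diff[symmetric]) (auto simp: E_sets E_anti)
  also have "\<dots> = prob (\<Inter>j\<in>{0,1,2}. (\<lambda>\<omega>. restrict (\<lambda>i. V i \<omega>) (K j)) -` A j \<inter> space M)"
    unfolding inter by (simp only: INT_insert INT_empty pre0 pre1 pre2 Int_UNIV_right Int_assoc)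
  also have "\<dots> = prob (E (k - m)) * prob {\<omega>\<in>space M. N (tg (k-m)) \<omega> \<noteq> N (tg (k-m-1)) \<omega>}
        * prob {\<omega>\<in>space M. N (tg k) \<omega> = N (tg (k-m)) \<omega>}"
    unfolding prodeq
    apply (subst prod.insert, simp, simp)
    apply (subst prod.insert, simp, simp)
    apply (simp only: prod.insert_remove prod.empty finite.emptyI empty_iff empty_Diff mult_1_right pre0 pre1 pre2 mult.assoc)
    done
  also have "\<dots> = F (k - m) * (1 - exp (- (r * (max (tg (k-m)) b - max (tg (k-m-1)) b))))
           * exp (- (r * (max (tg k) b - max (tg (k-m)) b)))"
    unfolding F_def using prob_neq[OF tg_nonneg tg_mono[of "k-m-1" "k-m"]] prob_eq[OF tg_nonneg tg_mono[of "k-m" k]]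
    by simp
  finally show ?thesis .
qed

end

context grid
begin

definition beta :: real where "beta = (1 - exp (- (r * h))) * exp (- (r * (real m * h)))"

lemma beta_pos: "0 < beta"
  using r_pos hpos by (simp add: beta_def)

lemma recur_zero: "Suc k0 \<le> k \<Longrightarrow> k \<le> L + m \<Longrightarrow> F (Suc k) = F k"
proof -
  assume k: "Suc k0 \<le> k" "k \<le> L + m"
  have "tg (k - m) \<le> b" "tg (k - m - 1) \<le> b" using k by (auto intro!: tg_le_b)
  then show ?thesis using recur[OF k(1)] by simp
qed

lemma recur_pos: "Suc (L + m) \<le> k \<Longrightarrow> F k - F (Suc k) = beta * F (k - m)"
proof -
  assume k: "Suc (L + m) \<le> k"
  then have k1: "Suc k0 \<le> k" using k0u by simp
  have b1: "b \<le> tg (k - m)" "b \<le> tg (k - m - 1)" "b \<le> tg k" using k by (auto intro!: tg_ge_b)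
  have d1: "tg (k - m) - tg (k - m - 1) = h" using tg_diff[of "k - m - 1" "k - m"] k by simp
  have d2: "tg k - tg (k - m) = real m * h" using tg_diff[of "k - m" k] k by simp
  show ?thesis using recur[OF k1] b1 d1 d2 by (simp add: beta_def max_def)
qed

lemma F_KS: "F (Suc (L + m)) = F (Suc k0)"
proof -
  have "Suc k0 \<le> Suc (L + m)" using k0u by simp
  then show ?thesis
  proof (induction rule: dec_induct)
    case base then show ?case by simp
  next
    case (step n)
    then show ?case using recur_zero[of n] by simp
  qed
qed

lemma partial: "beta * (\<Sum>i<n. F (Suc L + i)) = F (Suc (L + m)) - F (Suc (L + m) + n)"
proof (induction n)
  case 0 then show ?case by simp
next
  case (Suc n)
  have "F (Suc (L + m) + n) - F (Suc (Suc (L + m) + n)) = beta * F (Suc (L + m) + n - m)"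
    by (rule recur_pos) simp
  moreover have "Suc (L + m) + n - m = Suc L + n" by simp
  ultimately show ?case using Suc by (simp add: algebra_simps)
qed

lemma F_summable: "summable (\<lambda>i. F (Suc L + i))"
proof (rule summableI_nonneg_bounded)
  fix n
  have "beta * (\<Sum>i<n. F (Suc L + i)) \<le> F (Suc (L + m))" using partial F_nonneg by simp
  then show "(\<Sum>i<n. F (Suc L + i)) \<le> F (Suc (L + m)) / beta"
    using beta_pos by (simp add: field_simps mult.commute)
qed (rule F_nonneg)

lemma F_lim: "(\<lambda>n. F (Suc L + n)) \<longlonglongrightarrow> 0"
  using summable_LIMSEQ_zero[OF F_summable] .

lemma F_sum: "(\<Sum>i. F (Suc L + i)) = F (Suc (L + m)) / beta"
proof -
  have l1: "(\<lambda>n. \<Sum>i<n. F (Suc L + i)) \<longlonglongrightarrow> (\<Sum>i. F (Suc L + i))"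
    using summable_LIMSEQ[OF F_summable] .
  have "(\<lambda>n. F (Suc L + (n + m))) \<longlonglongrightarrow> 0"
    using LIMSEQ_ignore_initial_segment[OF F_lim, of m] by simp
  then have "(\<lambda>n. F (Suc (L + m) + n)) \<longlonglongrightarrow> 0" by (simp add: algebra_simps)
  then have "(\<lambda>n. (F (Suc (L + m)) - F (Suc (L + m) + n)) / beta) \<longlonglongrightarrow> (F (Suc (L + m)) - 0) / beta"
    by (intro tendsto_intros) (use beta_pos in auto)
  moreover have "(\<lambda>n. (F (Suc (L + m)) - F (Suc (L + m) + n)) / beta) = (\<lambda>n. \<Sum>i<n. F (Suc L + i))"
    using partial beta_pos by (auto simp: field_simps)
  ultimately have "(\<lambda>n. \<Sum>i<n. F (Suc L + i)) \<longlonglongrightarrow> F (Suc (L + m)) / beta" by simp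
  then show ?thesis using l1 LIMSEQ_unique by blast
qed

lemma F_summable_full: "summable (\<lambda>j. F (Suc j))"
proof -
  have "summable (\<lambda>j. F (Suc (j + L)))" using F_summable by (simp add: add.commute)
  then show ?thesis by (rule summable_iff_shift[THEN iffD1])
qed

lemma F_sum_full: "(\<Sum>j. F (Suc j)) = real L + F (Suc k0) / beta"
proof -
  have "(\<Sum>j. F (Suc j)) = (\<Sum>j. F (Suc (j + L))) + (\<Sum>j<L. F (Suc j))"
    by (rule suminf_split_initial_segment[OF F_summable_full])
  also have "(\<Sum>j. F (Suc (j + L))) = (\<Sum>i. F (Suc L + i))" by (simp add: add.commute)
  also have "(\<Sum>j<L. F (Suc j)) = (\<Sum>j<L. 1)" using k0L by (intro sum.cong refl F_init) auto
  finally show ?thesis using F_sum F_KS by simp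
qed

lemma AE_ex: "AE \<omega> in M. \<exists>k. Pk k \<omega>"
proof -
  define NE where "NE = {\<omega>\<in>space M. \<forall>k. \<not> Pk k \<omega>}"
  have "NE = space M - (\<Union>k. {\<omega>\<in>space M. Pk k \<omega>})" by (auto simp: NE_def)
  moreover have "(\<Union>k\<in>UNIV. {\<omega>\<in>space M. Pk k \<omega>}) \<in> sets M"
    by (rule sets.countable_UN) (use Pk_sets in blast)
  ultimately have NEs: "NE \<in> sets M" by simp
  have sub: "NE \<subseteq> E (Suc L + n)" for n by (auto simp: NE_def E_def)
  have "prob NE \<le> F (Suc L + n)" for n
    unfolding F_def by (rule finite_measure_mono[OF sub E_sets])
  then have "prob NE \<le> 0" using F_lim by (intro LIMSEQ_le_const[OF F_lim]) auto
  then have "prob NE = 0" by (simp add: measure_le_0_iff)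
  then have "NE \<in> null_sets M" using NEs by (simp add: emeasure_eq_measure null_sets_def)
  then show ?thesis by (rule AE_I') (auto simp: NE_def)
qed

lemma E_tau: "(\<integral>\<^sup>+\<omega>. of_nat (LEAST k. Pk k \<omega>) \<partial>M) = ennreal (real L + F (Suc k0) / beta)"
proof -
  have "AE \<omega> in M. (of_nat (LEAST k. Pk k \<omega>) :: ennreal) = (\<Sum>j. indicator (E (Suc j)) \<omega>)"
    using AE_ex AE_space
  proof (eventually_elim)
    case (elim \<omega>)
    show ?case
    proof -
      have True: "\<omega> \<in> space M" using elim by simp
      define n where "n = (LEAST k. Pk k \<omega>)"
      have n1: "Pk n \<omega>" unfolding n_def using elim(1) by (rule LeastI_ex)
      have n2: "\<And>k. k < n \<Longrightarrow> \<not> Pk k \<omega>" unfolding n_def using not_less_Least by blast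
      have ind: "(indicator (E (Suc j)) \<omega> :: ennreal) = (if j < n then 1 else 0)" for j
      proof (cases "j < n")
        case True
        then have "\<omega> \<in> E (Suc j)" using n2 \<open>\<omega> \<in> space M\<close> by (auto simp: E_def)
        then show ?thesis using True by simp
      next
        case False
        then have "n < Suc j" by simp
        then have "\<omega> \<notin> E (Suc j)" using n1 unfolding E_def by blast
        then show ?thesis using False by simp
      qed
      have "(\<Sum>j. indicator (E (Suc j)) \<omega> :: ennreal) = (\<Sum>j. if j < n then 1 else 0)"
        by (simp only: ind)
      also have "\<dots> = (\<Sum>j<n. if j < n then 1 else 0)"
        by (rule suminf_finite) auto
      also have "\<dots> = of_nat n" by simp
      finally show ?thesis by (simp add: n_def)
    qed
  qed
  then have "(\<integral>\<^sup>+\<omega>. of_nat (LEAST k. Pk k \<omega>) \<partial>M) = (\<integral>\<^sup>+\<omega>. (\<Sum>j. indicator (E (Suc j)) \<omega>) \<partial>M)"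
    by (rule nn_integral_cong_AE)
  also have "\<dots> = (\<Sum>j. \<integral>\<^sup>+\<omega>. indicator (E (Suc j)) \<omega> \<partial>M)"
    by (rule nn_integral_suminf) (rule borel_measurable_indicator[OF E_sets])
  also have "\<dots> = (\<Sum>j. ennreal (F (Suc j)))"
    by (simp add: E_sets emeasure_eq_measure F_def)
  also have "\<dots> = ennreal (\<Sum>j. F (Suc j))"
    by (rule suminf_ennreal2) (auto simp: F_nonneg F_summable_full)
  finally show ?thesis using F_sum_full by simp
qed

end

context path
begin

lemma grid_conv:
  fixes g0 u c :: real and k0 :: "nat \<Rightarrow> nat"
  assumes g0: "0 \<le> g0" "g0 \<le> u" and c: "0 < c"
    and k0d: "\<And>j. k0 j = (LEAST k. u + c \<le> g0 + real k * (c / 2^j))"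
    and ex: "\<And>j. \<exists>k. k0 j \<le> k \<and> f (g0 + real k * (c / 2^j)) = f (g0 + real (k - 2^j) * (c / 2^j))"
  defines "\<tau> j \<equiv> LEAST k. k0 j \<le> k \<and> f (g0 + real k * (c / 2^j)) = f (g0 + real (k - 2^j) * (c / 2^j))"
  defines "Tg j \<equiv> g0 + real (\<tau> j) * (c / 2^j)"
  shows "\<exists>T. finish_task f c u = Some T \<and> (\<forall>j. T \<le> Tg j) \<and> Tg \<longlonglongrightarrow> T \<and> (\<forall>j. Tg (Suc j) \<le> Tg j)"
proof -
  define h :: "nat \<Rightarrow> real" where "h j = c / 2^j" for j
  have hpos: "0 < h j" for j using c by (simp add: h_def)
  have ch: "c = 2^j * h j" for j by (simp add: h_def)
  define S where "S t \<longleftrightarrow> u + c \<le> t \<and> f t = f (t - c)" for t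
  have k0I: "u + c \<le> g0 + real (k0 j) * h j" for j
  proof -
    obtain k where "k0 j \<le> k" using ex by blast
    have ex2: "\<exists>k. u + c \<le> g0 + real k * (c / 2^j)"
    proof -
      obtain n :: nat where "(u + c - g0) / (c / 2^j) \<le> real n" using real_arch_simple by blast
      then have "u + c - g0 \<le> real n * (c / 2^j)" using c by (simp add: field_simps)
      then show ?thesis by (intro exI[of _ n]) simp
    qed
    show ?thesis unfolding k0d h_def using ex2 by (rule LeastI_ex)
  qed
  have k0le: "k0 j \<le> k" if "u + c \<le> g0 + real k * h j" for j k
    unfolding k0d using that by (simp add: h_def Least_le)
  have k0m: "2^j \<le> k0 j" for j
  proof -
    have "c \<le> real (k0 j) * h j" using k0I[of j] g0 by simp
    then have "2^j * h j \<le> real (k0 j) * h j" using ch[of j] by simp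
    then have "(2::real)^j \<le> real (k0 j)" using hpos[of j] by simp
    then show ?thesis by (metis of_nat_le_iff of_nat_numeral of_nat_power)
  qed
  have key: "(k0 j \<le> k \<and> f (g0 + real k * h j) = f (g0 + real (k - 2^j) * h j)) \<longleftrightarrow> S (g0 + real k * h j)" for j k
  proof
    assume H: "k0 j \<le> k \<and> f (g0 + real k * h j) = f (g0 + real (k - 2^j) * h j)"
    then have "2^j \<le> k" using k0m[of j] by linarith
    then have e: "g0 + real (k - 2^j) * h j = g0 + real k * h j - c"
      by (simp add: ch[of j] of_nat_diff algebra_simps)
    have "g0 + real (k0 j) * h j \<le> g0 + real k * h j" using H hpos[of j] by (simp add: mult_right_mono)
    then show "S (g0 + real k * h j)" using H k0I[of j] e by (simp add: S_def)
  next
    assume H: "S (g0 + real k * h j)"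
    then have k1: "k0 j \<le> k" using k0le by (simp add: S_def)
    then have "2^j \<le> k" using k0m[of j] by linarith
    then have e: "g0 + real (k - 2^j) * h j = g0 + real k * h j - c"
      by (simp add: ch[of j] of_nat_diff algebra_simps)
    show "k0 j \<le> k \<and> f (g0 + real k * h j) = f (g0 + real (k - 2^j) * h j)"
      using k1 H e by (simp add: S_def diff_add_eq add_diff_eq)
  qed
  have tauI: "S (Tg j)" for j
  proof -
    have "k0 j \<le> \<tau> j \<and> f (g0 + real (\<tau> j) * (c / 2^j)) = f (g0 + real (\<tau> j - 2^j) * (c / 2^j))"
      unfolding \<tau>_def using ex[of j] by (rule LeastI_ex)
    then show ?thesis using key[of j "\<tau> j"] by (simp add: Tg_def h_def)
  qed
  have tau_le: "Tg j \<le> g0 + real k * h j" if "S (g0 + real k * h j)" for j k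
  proof -
    have "\<tau> j \<le> k" unfolding \<tau>_def using key[of j k] that by (simp add: h_def Least_le)
    then have "real (\<tau> j) * h j \<le> real k * h j" using hpos[of j] by (simp add: mult_right_mono)
    then show ?thesis by (simp add: Tg_def h_def)
  qed
  have Su: "0 \<le> u" using g0 by simp
  obtain T where T: "finish_task f c u = Some T" "T \<le> Tg 0" "u + c \<le> T" "f T = f (T - c)"
    using finish_task_le[OF Su c] tauI[of 0] by (auto simp: S_def)
  have Tle: "T \<le> Tg j" for j
  proof -
    obtain T' where "finish_task f c u = Some T'" "T' \<le> Tg j"
      using finish_task_le[OF Su c] tauI[of j] by (auto simp: S_def)
    then show ?thesis using T(1) by simp
  qed
  have dec: "Tg (Suc j) \<le> Tg j" for j
  proof -
    have e: "Tg j = g0 + real (2 * \<tau> j) * h (Suc j)" by (simp add: Tg_def h_def)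
    have "S (g0 + real (2 * \<tau> j) * h (Suc j))" using tauI[of j] by (simp only: e)
    then have "Tg (Suc j) \<le> g0 + real (2 * \<tau> j) * h (Suc j)" by (rule tau_le)
    then show ?thesis by (simp only: e)
  qed
  obtain d where d: "d > 0" "\<And>s. T \<le> s \<and> s < T + d \<Longrightarrow> f s = f T"
    using rc_const[OF rc, of T] T(3) c Su by auto
  have hlim: "h \<longlonglongrightarrow> 0" unfolding h_def by (rule LIMSEQ_divide_realpow_zero) simp
  have ev: "eventually (\<lambda>j. h j < d) sequentially" using order_tendstoD(2)[OF hlim d(1)] .
  have up: "Tg j \<le> T + h j" if hj: "h j < d" for j
  proof -
    define k where "k = nat \<lceil>(T - g0) / h j\<rceil>"
    have Tg0: "0 \<le> T - g0" using T(3) g0 c by simp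
    have k1: "(T - g0) / h j \<le> real k" unfolding k_def by linarith
    have q0: "0 \<le> (T - g0) / h j" using Tg0 hpos[of j] by simp
    have k2: "real k < (T - g0) / h j + 1"
    proof -
      have "real k = real_of_int \<lceil>(T - g0) / h j\<rceil>" unfolding k_def using q0 by simp
      then show ?thesis by linarith
    qed
    have t1: "T \<le> g0 + real k * h j" using k1 hpos[of j] by (simp add: field_simps)
    have t2: "g0 + real k * h j < T + h j" using k2 hpos[of j] by (simp add: field_simps)
    define t where "t = g0 + real k * h j"
    have ft: "f t = f T" using d(2)[of t] t1 t2 hj by (simp add: t_def)
    have "f (T - c) \<le> f (t - c)" by (rule monoD) (use T(3) Su t1 t_def in auto)
    moreover have "f (t - c) \<le> f t" by (rule monoD) (use T(3) Su t1 t_def c in auto)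
    ultimately have "f t = f (t - c)" using ft T(4) by simp
    then have "S t" using T(3) t1 by (simp add: S_def t_def)
    then have "Tg j \<le> t" unfolding t_def by (rule tau_le)
    then show ?thesis using t2 by (simp add: t_def)
  qed
  have "Tg \<longlonglongrightarrow> T"
  proof (rule tendsto_sandwich[of "\<lambda>j. T" _ _ "\<lambda>j. T + h j"])
    show "eventually (\<lambda>j. T \<le> Tg j) sequentially" using Tle by simp
    show "eventually (\<lambda>j. Tg j \<le> T + h j) sequentially" using ev by (rule eventually_mono) (rule up)
    show "(\<lambda>j. T) \<longlonglongrightarrow> T" by simp
    show "(\<lambda>j. T + h j) \<longlonglongrightarrow> T" using tendsto_add[OF tendsto_const hlim, of T] by simp
  qed
  then show ?thesis using T(1) Tle dec by blast
qed

end

context grid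
begin

lemma tau_meas: "(\<lambda>\<omega>. LEAST k. Pk k \<omega>) \<in> measurable M (count_space UNIV)"
proof (rule measurable_Least)
  fix i show "(\<lambda>\<omega>. Pk i \<omega>) \<in> measurable M (count_space UNIV)"
    using Pk_sets[of i] by (simp add: pred_def[symmetric])
qed

lemma T_meas: "(\<lambda>\<omega>. ennreal (tg (LEAST k. Pk k \<omega>))) \<in> borel_measurable M"
proof -
  have "(\<lambda>n::nat. ennreal (tg n)) \<in> measurable (count_space UNIV) borel" by simp
  from measurable_compose[OF tau_meas this] show ?thesis by (simp add: comp_def)
qed

lemma E_T: "(\<integral>\<^sup>+\<omega>. ennreal (tg (LEAST k. Pk k \<omega>)) \<partial>M) = ennreal (g0 + h * (real L + F (Suc k0) / beta))"
proof -
  have eq: "ennreal (tg n) = ennreal g0 + ennreal h * of_nat n" for n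
    using g0 hpos by (simp add: tg_def ennreal_plus ennreal_mult ennreal_of_nat_eq_real_of_nat[symmetric] mult.commute)
  have m1: "(\<lambda>\<omega>. of_nat (LEAST k. Pk k \<omega>) :: ennreal) \<in> borel_measurable M"
  proof -
    have "(\<lambda>n::nat. of_nat n :: ennreal) \<in> measurable (count_space UNIV) borel" by simp
    from measurable_compose[OF tau_meas this] show ?thesis by (simp add: comp_def)
  qed
  have "(\<integral>\<^sup>+\<omega>. ennreal (tg (LEAST k. Pk k \<omega>)) \<partial>M) = (\<integral>\<^sup>+\<omega>. (ennreal g0 + ennreal h * of_nat (LEAST k. Pk k \<omega>)) \<partial>M)"
    by (simp only: eq)
  also have "\<dots> = (\<integral>\<^sup>+\<omega>. ennreal g0 \<partial>M) + (\<integral>\<^sup>+\<omega>. ennreal h * of_nat (LEAST k. Pk k \<omega>) \<partial>M)"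
    by (rule nn_integral_add) (use m1 in auto)
  also have "(\<integral>\<^sup>+\<omega>. ennreal h * of_nat (LEAST k. Pk k \<omega>) \<partial>M) = ennreal h * (\<integral>\<^sup>+\<omega>. of_nat (LEAST k. Pk k \<omega>) \<partial>M)"
    by (rule nn_integral_cmult) (rule m1)
  also have "(\<integral>\<^sup>+\<omega>. ennreal g0 \<partial>M) = ennreal g0" by (simp add: emeasure_space_1)
  finally have "(\<integral>\<^sup>+\<omega>. ennreal (tg (LEAST k. Pk k \<omega>)) \<partial>M) = ennreal g0 + ennreal h * ennreal (real L + F (Suc k0) / beta)"
    by (simp only: E_tau)
  also have "\<dots> = ennreal (g0 + h * (real L + F (Suc k0) / beta))"
    using g0 hpos beta_pos F_nonneg[of "Suc k0"] by (simp add: ennreal_plus ennreal_mult)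
  finally show ?thesis .
qed

end

context nhpp_setup
begin

lemma scheme_value:
  fixes gz u c V :: real and L kz :: "nat \<Rightarrow> nat" and v :: "nat \<Rightarrow> real"
  assumes gz: "0 \<le> gz" "gz \<le> u" and u0: "0 < u" and ub: "u \<le> b" and c: "0 < c" and buc: "b < u + c"
    and hL: "\<And>j. gz + real (L j) * (c / 2^j) = b"
    and k0d: "\<And>j. kz j = (LEAST k. u + c \<le> gz + real k * (c / 2^j))"
    and vdef: "\<And>j. v j = gz + (c / 2^j) * (real (L j) + (1 - exp (- (r * (real (kz j - L j) * (c / 2^j))))) /
                  ((1 - exp (- (r * (c / 2^j)))) * exp (- (r * (real (2^j) * (c / 2^j))))))"
    and vlim: "v \<longlonglongrightarrow> V"
  shows "expected_completion M N [u, c] 0 = ennreal V"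
proof -
  define h :: "nat \<Rightarrow> real" where "h j = c / 2^j" for j
  have hpos: "0 < h j" for j using c by (simp add: h_def)
  have ch: "c = 2^j * h j" for j by (simp add: h_def)
  have k0I: "u + c \<le> gz + real (kz j) * h j" for j
  proof -
    have ex2: "\<exists>k. u + c \<le> gz + real k * (c / 2^j)"
    proof -
      obtain n :: nat where "(u + c - gz) / (c / 2^j) \<le> real n" using real_arch_simple by blast
      then have "u + c - gz \<le> real n * (c / 2^j)" using c by (simp add: field_simps)
      then show ?thesis by (intro exI[of _ n]) simp
    qed
    show ?thesis unfolding k0d h_def using ex2 by (rule LeastI_ex)
  qed
  have grid_j: "grid M N b r gz (h j) (2^j) (L j) (kz j)" for j
  proof -
    have "L j \<le> kz j"
    proof (rule ccontr)
      assume "\<not> ?thesis"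
      then have "real (kz j) * h j < real (L j) * h j" using hpos[of j] by simp
      then show False using k0I[of j] hL[of j] buc by (simp add: h_def)
    qed
    moreover have "2^j \<le> kz j"
    proof -
      have "c \<le> real (kz j) * h j" using k0I[of j] gz by simp
      then have "2^j * h j \<le> real (kz j) * h j" using ch[of j] by simp
      then have "(2::real)^j \<le> real (kz j)" using hpos[of j] by simp
      then show ?thesis by (metis of_nat_le_iff of_nat_numeral of_nat_power)
    qed
    moreover have "kz j \<le> L j + 2^j"
    proof -
      have "gz + real (L j + 2^j) * h j = (gz + real (L j) * h j) + 2^j * h j" by (simp add: algebra_simps)
      also have "\<dots> = b + c" using hL[of j] ch[of j] unfolding h_def by simp
      finally have "u + c \<le> gz + real (L j + 2^j) * h j" using ub by simp
      then have "u + c \<le> gz + real (L j + 2^j) * (c / 2^j)" by (simp only: h_def)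
      then show ?thesis unfolding k0d by (rule Least_le)
    qed
    moreover have "nhpp_setup M N b r" using NH r_pos by (simp add: nhpp_setup_def)
    ultimately show ?thesis using gz hpos[of j] hL[of j]
      by (intro grid.intro) (auto simp: grid_axioms_def h_def)
  qed
  define T where "T j \<omega> = grid.tg gz (h j) (LEAST k. grid.Pk N gz (h j) (2^j) (kz j) k \<omega>)" for j \<omega>
  have ET: "(\<integral>\<^sup>+\<omega>. ennreal (T j \<omega>) \<partial>M) = ennreal (v j)" for j
  proof -
    interpret G: grid M N b r gz "h j" "2^j" "L j" "kz j" by (rule grid_j)
    have "(\<integral>\<^sup>+\<omega>. ennreal (T j \<omega>) \<partial>M) = ennreal (gz + h j * (real (L j) + G.F (Suc (kz j)) / G.beta))"
      unfolding T_def by (rule G.E_T)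
    also have "\<dots> = ennreal (v j)" unfolding G.F_k0 G.beta_def vdef by (simp add: h_def)
    finally show ?thesis .
  qed
  have Tm: "(\<lambda>\<omega>. ennreal (T j \<omega>)) \<in> borel_measurable M" for j
  proof -
    interpret G: grid M N b r gz "h j" "2^j" "L j" "kz j" by (rule grid_j)
    show ?thesis unfolding T_def by (rule G.T_meas)
  qed
  have AEex: "AE \<omega> in M. \<forall>j. \<exists>k. grid.Pk N gz (h j) (2^j) (kz j) k \<omega>"
  proof (subst AE_all_countable, intro allI)
    fix j
    interpret G: grid M N b r gz "h j" "2^j" "L j" "kz j" by (rule grid_j)
    show "AE \<omega> in M. \<exists>k. G.Pk k \<omega>" by (rule G.AE_ex)
  qed
  have AEu: "AE \<omega> in M. \<omega> \<in> {\<omega>\<in>space M. N u \<omega> = N 0 \<omega>}"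
  proof (rule AE_prob_1)
    have "b \<ge> 0" using gz ub by simp
    then show "prob {\<omega>\<in>space M. N u \<omega> = N 0 \<omega>} = 1"
      using prob_eq[of 0 u] u0 ub by (simp add: max_def)
  qed
  have AEmain: "AE \<omega> in M. (case finish_all (\<lambda>s. N s \<omega>) 0 [u, c] of None \<Rightarrow> \<infinity> | Some v \<Rightarrow> ennreal (v - 0))
       = (INF j. ennreal (T j \<omega>)) \<and> (\<forall>j. ennreal (T (Suc j) \<omega>) \<le> ennreal (T j \<omega>))"
    using AEex AEu
  proof eventually_elim
    case (elim \<omega>)
    then have sp: "\<omega> \<in> space M" and Nu: "N u \<omega> = N 0 \<omega>" by auto
    interpret P: path "\<lambda>s. N s \<omega>" by (rule path[OF sp])
    have f1: "finish_task (\<lambda>s. N s \<omega>) u 0 = Some u"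
    proof -
      obtain T1 where "finish_task (\<lambda>s. N s \<omega>) u 0 = Some T1" "T1 \<le> u" "0 + u \<le> T1"
        using P.finish_task_le[of 0 u u] u0 Nu by auto
      then show ?thesis by simp
    qed
    have Pk_eq: "grid.Pk N gz (h j) (2^j) (kz j) k \<omega> \<longleftrightarrow>
        (kz j \<le> k \<and> N (gz + real k * (c / 2^j)) \<omega> = N (gz + real (k - 2^j) * (c / 2^j)) \<omega>)" for j k
      using grid.Pk_def[OF grid_j[of j]] grid.tg_def[OF grid_j[of j]] by (simp add: h_def)
    have ex: "\<exists>k. kz j \<le> k \<and> N (gz + real k * (c / 2^j)) \<omega> = N (gz + real (k - 2^j) * (c / 2^j)) \<omega>" for j
      using elim(1) Pk_eq by blast
    have Teq: "T j \<omega> = gz + real (LEAST k. kz j \<le> k \<and> N (gz + real k * (c / 2^j)) \<omega> = N (gz + real (k - 2^j) * (c / 2^j)) \<omega>) * (c / 2^j)" for j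
      unfolding T_def Pk_eq grid.tg_def[OF grid_j[of j]] by (simp add: h_def)
    obtain TT where TT: "finish_task (\<lambda>s. N s \<omega>) c u = Some TT" "\<forall>j. TT \<le> T j \<omega>"
        "(\<lambda>j. T j \<omega>) \<longlonglongrightarrow> TT" "\<forall>j. T (Suc j) \<omega> \<le> T j \<omega>"
      using P.grid_conv[of gz u c kz, OF gz c k0d ex] unfolding Teq[symmetric] by blast
    have fa: "finish_all (\<lambda>s. N s \<omega>) 0 [u, c] = Some TT" using f1 TT(1) by simp
    have dec: "decseq (\<lambda>j. ennreal (T j \<omega>))"
      unfolding decseq_Suc_iff using TT(4) by (simp add: ennreal_leI)
    have "(\<lambda>j. ennreal (T j \<omega>)) \<longlonglongrightarrow> (INF j. ennreal (T j \<omega>))" by (rule LIMSEQ_INF[OF dec])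
    moreover have "(\<lambda>j. ennreal (T j \<omega>)) \<longlonglongrightarrow> ennreal TT" by (rule tendsto_ennrealI[OF TT(3)])
    ultimately have "(INF j. ennreal (T j \<omega>)) = ennreal TT" using LIMSEQ_unique by blast
    then show ?case using fa TT(4) by (simp add: ennreal_leI)
  qed
  have "expected_completion M N [u, c] 0 = (\<integral>\<^sup>+\<omega>. (INF j. ennreal (T j \<omega>)) \<partial>M)"
    unfolding expected_completion_def by (rule nn_integral_cong_AE) (use AEmain in auto)
  also have "\<dots> = (INF j. (\<integral>\<^sup>+\<omega>. ennreal (T j \<omega>) \<partial>M))"
  proof (rule nn_integral_monotone_convergence_INF_AE')
    show "AE \<omega> in M. ennreal (T (Suc i) \<omega>) \<le> ennreal (T i \<omega>)" for i using AEmain by auto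
    show "(\<lambda>\<omega>. ennreal (T i \<omega>)) \<in> borel_measurable M" for i by (rule Tm)
    show "(\<integral>\<^sup>+\<omega>. ennreal (T 0 \<omega>) \<partial>M) < \<infinity>" using ET[of 0] by simp
  qed
  also have "\<dots> = (INF j. ennreal (v j))" by (simp add: ET)
  also have "\<dots> = ennreal V"
  proof -
    have "ennreal (v (Suc j)) \<le> ennreal (v j)" for j
    proof -
      have "(\<integral>\<^sup>+\<omega>. ennreal (T (Suc j) \<omega>) \<partial>M) \<le> (\<integral>\<^sup>+\<omega>. ennreal (T j \<omega>) \<partial>M)"
        by (rule nn_integral_mono_AE) (use AEmain in auto)
      then show ?thesis by (simp add: ET)
    qed
    then have dec: "decseq (\<lambda>j. ennreal (v j))" unfolding decseq_Suc_iff by blast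
    have "(\<lambda>j. ennreal (v j)) \<longlonglongrightarrow> (INF j. ennreal (v j))" by (rule LIMSEQ_INF[OF dec])
    moreover have "(\<lambda>j. ennreal (v j)) \<longlonglongrightarrow> ennreal V" by (rule tendsto_ennrealI[OF vlim])
    ultimately show ?thesis using LIMSEQ_unique by blast
  qed
  finally show ?thesis .
qed

end

lemma phi_lim:
  fixes c r :: real assumes c: "0 < c" and r: "0 < r"
  shows "(\<lambda>j::nat. (c / 2^j) / (1 - exp (- (r * (c / 2^j))))) \<longlonglongrightarrow> 1 / r"
proof -
  have d: "((\<lambda>x. exp (- (r * x))) has_real_derivative (exp (- (r * 0)) * (- (r * 1)))) (at 0)"
    by (intro derivative_eq_intros) auto
  then have "((\<lambda>x. (exp (- (r * (0 + x))) - exp (- (r * 0))) / x) \<longlongrightarrow> - r) (at 0)"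
    by (simp add: DERIV_def)
  then have g: "((\<lambda>x. (exp (- (r * x)) - 1) / x) \<longlongrightarrow> - r) (at 0)" by simp
  have hl: "(\<lambda>j::nat. c / 2^j) \<longlonglongrightarrow> 0" by (rule LIMSEQ_divide_realpow_zero) simp
  have hf: "filterlim (\<lambda>j::nat. c / 2^j) (at 0) sequentially"
    unfolding filterlim_at using hl c by auto
  have "(\<lambda>j::nat. (exp (- (r * (c / 2^j))) - 1) / (c / 2^j)) \<longlonglongrightarrow> - r"
    using filterlim_compose[OF g hf] by simp
  then have "(\<lambda>j::nat. inverse (- ((exp (- (r * (c / 2^j))) - 1) / (c / 2^j)))) \<longlonglongrightarrow> inverse (- (- r))"
    using r by (intro tendsto_intros) auto
  moreover have "inverse (- ((exp (- (r * (c / 2^j))) - 1) / (c / 2^j))) = (c / 2^j) / (1 - exp (- (r * (c / 2^j))))" for j :: nat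
    by (simp only: minus_divide_left minus_diff_eq inverse_divide)
  ultimately show ?thesis by (simp add: inverse_eq_divide)
qed

context nhpp_setup
begin

lemma case_ba:
  fixes a :: real assumes a: "0 < a" "a < b"
  shows "expected_completion M N [b, a] 0 = ennreal (b + (exp (r * a) - 1) / r)"
proof -
  define E where "E = exp (- (r * a))"
  define v where "v j = b + (a / 2^j) * (real ((\<lambda>j. 0::nat) j) + (1 - exp (- (r * (real ((\<lambda>j::nat. (2::nat)^j) j - (\<lambda>j. 0::nat) j) * (a / 2^j))))) /
                  ((1 - exp (- (r * (a / 2^j)))) * exp (- (r * (real ((2::nat)^j) * (a / 2^j))))))" for j :: nat
  have Epos: "0 < E" by (simp add: E_def)
  have veq: "v j = b + ((1 - E) / E) * ((a / 2^j) / (1 - exp (- (r * (a / 2^j)))))" for j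
  proof -
    have "real ((2::nat)^j) * (a / 2^j) = a" by simp
    then show ?thesis unfolding v_def E_def by (simp add: ac_simps)
  qed
  have "v \<longlonglongrightarrow> b + ((1 - E) / E) * (1 / r)"
    unfolding veq[abs_def] by (intro tendsto_intros phi_lim) (use a r_pos in auto)
  moreover have "b + ((1 - E) / E) * (1 / r) = b + (exp (r * a) - 1) / r"
  proof -
    have "(1 - E) / E = 1 / E - 1" using Epos by (simp add: diff_divide_distrib)
    also have "1 / E = exp (r * a)" by (simp add: E_def exp_minus divide_inverse)
    finally show ?thesis by simp
  qed
  ultimately have vlim: "v \<longlonglongrightarrow> b + (exp (r * a) - 1) / r" by simp
  show ?thesis
  proof (rule scheme_value[where gz = b and L = "\<lambda>j. 0" and kz = "\<lambda>j. 2^j", OF _ _ _ _ _ _ _ _ _ vlim])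
    show "0 \<le> b" "b \<le> b" "0 < b" "b \<le> b" "0 < a" "b < b + a" using a by auto
    show "b + real 0 * (a / 2^j) = b" for j by simp
    show "v j = b + (a / 2^j) * (real 0 + (1 - exp (- (r * (real (2^j - 0) * (a / 2^j))))) /
                  ((1 - exp (- (r * (a / 2^j)))) * exp (- (r * (real (2^j) * (a / 2^j))))))" for j
      by (simp add: v_def)
    show "2^j = (LEAST k. b + a \<le> b + real k * (a / 2^j))" for j
    proof (rule Least_equality[symmetric])
      show "b + a \<le> b + real (2^j) * (a / 2^j)" by simp
      fix y assume "b + a \<le> b + real y * (a / 2^j)"
      then have "a * 2^j \<le> real y * a" by (simp add: field_simps)
      then have "(2::real)^j \<le> real y" using a by (simp add: mult.commute)
      then show "2^j \<le> y" by (metis of_nat_le_iff of_nat_numeral of_nat_power)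
    qed
  qed
qed

lemma case_ab:
  fixes a :: real assumes a: "0 < a" "a < b"
  shows "expected_completion M N [a, b] 0 = ennreal (b + (exp (r * b) - exp (r * (b - a))) / r)"
proof -
  define kz where "kz j = (LEAST k. a + b \<le> 0 + real k * (b / 2^j))" for j :: nat
  define h :: "nat \<Rightarrow> real" where "h j = b / 2^j" for j
  have hpos: "0 < h j" for j using a by (simp add: h_def)
  have bh: "real ((2::nat)^j) * h j = b" for j by (simp add: h_def)
  have exk: "\<exists>k. a + b \<le> 0 + real k * (b / 2^j)" for j
  proof -
    obtain n :: nat where "(a + b) / (b / 2^j) \<le> real n" using real_arch_simple by blast
    then have "a + b \<le> real n * (b / 2^j)" using a by (simp add: field_simps)
    then show ?thesis by (intro exI[of _ n]) simp
  qed
  have kI: "a + b \<le> real (kz j) * h j" for j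
    using LeastI_ex[OF exk[of j]] by (simp add: kz_def h_def)
  have k2: "2^j \<le> kz j" for j
  proof -
    have "real ((2::nat)^j) * h j \<le> real (kz j) * h j" using kI[of j] bh[of j] a by simp
    then have "real ((2::nat)^j) \<le> real (kz j)" using hpos[of j] by simp
    then show ?thesis by (simp only: of_nat_le_iff)
  qed
  have k1: "1 \<le> kz j" for j using k2[of j] by (metis one_le_numeral one_le_power order_trans)
  have kU: "real (kz j) * h j < a + b + h j" for j
  proof -
    have "\<not> a + b \<le> 0 + real (kz j - 1) * (b / 2^j)"
      unfolding kz_def by (rule not_less_Least) (use k1[of j] in \<open>simp add: kz_def\<close>)
    then have "real (kz j - 1) * h j < a + b" by (simp add: h_def)
    moreover have "real (kz j - 1) * h j = real (kz j) * h j - h j" using k1[of j] by (simp add: of_nat_diff algebra_simps)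
    ultimately show ?thesis by simp
  qed
  define q where "q j = real (kz j - 2^j) * h j" for j
  have qeq: "q j = real (kz j) * h j - b" for j
    unfolding q_def using k2[of j] bh[of j] by (simp add: of_nat_diff algebra_simps)
  have hl: "h \<longlonglongrightarrow> 0" unfolding h_def by (rule LIMSEQ_divide_realpow_zero) simp
  have qlim: "q \<longlonglongrightarrow> a"
  proof (rule tendsto_sandwich[of "\<lambda>j. a" _ _ "\<lambda>j. a + h j"])
    have "a \<le> q j" for j using kI[of j] qeq[of j] by simp
    then show "eventually (\<lambda>j. a \<le> q j) sequentially" by simp
    have "q j \<le> a + h j" for j using kU[of j] qeq[of j] by simp
    then show "eventually (\<lambda>j. q j \<le> a + h j) sequentially" by simp
    show "(\<lambda>j. a) \<longlonglongrightarrow> a" by simp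
    show "(\<lambda>j. a + h j) \<longlonglongrightarrow> a" using tendsto_add[OF tendsto_const hl, of a] by simp
  qed
  define v where "v j = 0 + (b / 2^j) * (real ((\<lambda>j::nat. (2::nat)^j) j) + (1 - exp (- (r * (real (kz j - (\<lambda>j::nat. (2::nat)^j) j) * (b / 2^j))))) /
                  ((1 - exp (- (r * (b / 2^j)))) * exp (- (r * (real ((2::nat)^j) * (b / 2^j))))))" for j :: nat
  have veq: "v j = b + ((1 - exp (- (r * q j))) * exp (r * b)) * ((b / 2^j) / (1 - exp (- (r * (b / 2^j)))))" for j
  proof -
    have e1: "real ((2::nat)^j) * (b / 2^j) = b" by simp
    have e2: "(b / 2^j) * real ((2::nat)^j) = b" by simp
    have e3: "1 / exp (- (r * b)) = exp (r * b)" by (simp add: exp_minus divide_inverse)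
    have "v j = (b / 2^j) * real ((2::nat)^j) + (b / 2^j) * ((1 - exp (- (r * q j))) / ((1 - exp (- (r * (b / 2^j)))) * exp (- (r * b))))"
      unfolding v_def q_def h_def e1 by (simp add: distrib_left)
    also have "(b / 2^j) * ((1 - exp (- (r * q j))) / ((1 - exp (- (r * (b / 2^j)))) * exp (- (r * b))))
       = ((1 - exp (- (r * q j))) * (1 / exp (- (r * b)))) * ((b / 2^j) / (1 - exp (- (r * (b / 2^j)))))"
      by (simp add: ac_simps)
    finally show ?thesis unfolding e2 e3 .
  qed
  have "v \<longlonglongrightarrow> b + ((1 - exp (- (r * a))) * exp (r * b)) * (1 / r)"
    unfolding veq[abs_def] by (intro tendsto_intros phi_lim qlim) (use a r_pos in auto)
  moreover have "((1 - exp (- (r * a))) * exp (r * b)) = exp (r * b) - exp (r * (b - a))"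
  proof -
    have "exp (- (r * a)) * exp (r * b) = exp (r * (b - a))" by (simp add: exp_add[symmetric] algebra_simps)
    then show ?thesis by (simp add: left_diff_distrib)
  qed
  ultimately have vlim: "v \<longlonglongrightarrow> b + (exp (r * b) - exp (r * (b - a))) / r" by simp
  show ?thesis
  proof (rule scheme_value[where gz = 0 and L = "\<lambda>j. 2^j" and kz = kz, OF _ _ _ _ _ _ _ _ _ vlim])
    show "0 \<le> (0::real)" "0 \<le> a" "0 < a" "a \<le> b" "0 < b" "b < a + b" using a by auto
    show "0 + real (2^j) * (b / 2^j) = b" for j :: nat by simp
    show "v j = 0 + (b / 2^j) * (real (2^j) + (1 - exp (- (r * (real (kz j - 2^j) * (b / 2^j))))) /
                  ((1 - exp (- (r * (b / 2^j)))) * exp (- (r * (real (2^j) * (b / 2^j))))))" for j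
      by (simp add: v_def)
    show "kz j = (LEAST k. a + b \<le> 0 + real k * (b / 2^j))" for j by (simp add: kz_def)
  qed
qed

end

theorem proposition1:
  fixes a b r :: real and M :: "'a measure" and N :: "real \<Rightarrow> 'a \<Rightarrow> nat"
  assumes "0 < a" and "a < b" and "0 < r"
    and "is_NHPP M N (\<lambda>t. if t \<le> b then 0 else r)"
  shows "expected_completion M N [a, b] 0 = ennreal (b + (exp (r * b) - exp (r * (b - a))) / r)
       \<and> expected_completion M N [b, a] 0 = ennreal (b + (exp (r * a) - 1) / r)
       \<and> expected_completion M N [b, a] 0 < expected_completion M N [a, b] 0"
proof -
  interpret nhpp_setup M N b r using assms(3,4) by (simp add: nhpp_setup_def)
  have e1: "expected_completion M N [a, b] 0 = ennreal (b + (exp (r * b) - exp (r * (b - a))) / r)"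
    using case_ab assms(1,2) by blast
  have e2: "expected_completion M N [b, a] 0 = ennreal (b + (exp (r * a) - 1) / r)"
    using case_ba assms(1,2) by blast
  have x1: "1 < exp (r * (b - a))" using assms by simp
  have x2: "0 < exp (r * a) - 1" using assms by simp
  have x3: "exp (r * b) - exp (r * (b - a)) = exp (r * (b - a)) * (exp (r * a) - 1)"
    by (simp add: right_diff_distrib exp_add[symmetric] algebra_simps)
  have "exp (r * a) - 1 < exp (r * (b - a)) * (exp (r * a) - 1)" using x1 x2 by simp
  then have "(exp (r * a) - 1) / r < (exp (r * b) - exp (r * (b - a))) / r"
    unfolding x3 using assms(3) by (simp add: divide_strict_right_mono)
  then have lt: "b + (exp (r * a) - 1) / r < b + (exp (r * b) - exp (r * (b - a))) / r" by simp
  have pos: "0 < b + (exp (r * b) - exp (r * (b - a))) / r"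
    using lt x2 assms by (smt (verit) divide_pos_pos)
  have "ennreal (b + (exp (r * a) - 1) / r) < ennreal (b + (exp (r * b) - exp (r * (b - a))) / r)"
    using lt pos by (simp add: ennreal_lessI)
  then show ?thesis using e1 e2 by simp
qed

end
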